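(* Let $M$ be a monoid generated by a finite set $A$, let $H$ be an $\mathcal{H}$-class of $M$, let $G=\mathcal{G}(H)$ be the Schützenberger group of $H$, and let $\Gamma(R,A)$ be the Schützenberger graph of the $\mathcal{R}$-class $R$ containing $H$. Then the left translation action of $G$ on $\Gamma(R,A)$ is by isometries and is outward proper. Moreover, the action is cocompact if and only if $R$ contains only finitely many $\mathcal{H}$-classes.
   Context: Green's relations on a monoid $M$: $x\mathcal{R}y$ iff $xM=yM$; $x\mathcal{L}y$ iff $Mx=My$; $\mathcal{H}=\mathcal{R}\cap\mathcal{L}$. For an $\mathcal{H}$-class $H$, let $\mathrm{Stab}(H)=\{s\in M:sH=H\}$ and $\sigma$ the congruence on it with $x\,\sigma\,y$ iff $xh=yh$ for all $h\in H$; the Schützenberger group is the group $\mathcal{G}(H)=\mathrm{Stab}(H)/\sigma$, acting on the $\mathcal{R}$-class $R\supseteq H$ by $(s/\sigma)\cdot r=sr$. A semimetric space is a set $X$ with $d:X\times X\to\mathbb{R}^{\ge0}\cup\{\infty\}$, $d(x,y)=0$ iff $x=y$, and the triangle inequality (no symmetry). For a directed graph $\Gamma$ with vertex set $V$, edge set $E$, source/target maps $\iota,\tau$, the semimetric space $\Gamma^*$ has point set $V\cup(E\times(0,1))$ with: $d(x,y)$ for vertices the least number of edges in a directed path ($\infty$ if none); $d((e,\mu),y)=(1-\mu)+d(\tau(e),y)$; $d(x,(e,\mu))=d(x,\iota(e))+\mu$; $d((e,\mu),(f,\nu))=\nu-\mu$ if $e=f$, $\nu\ge\mu$, else $d(\tau(e),\iota(f))+(1-\mu)+\nu$.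 The Schützenberger graph $\Gamma(R,A)$ is $\Delta^*$ where $\Delta$ has vertex set $R$ and an edge labelled $a$ from $x$ to $y$ whenever $x,y\in R$, $a\in A$, $xa=y$. The left translation action of $G$ on $\Gamma(R,A)$ sends a vertex $r$ to $gr$, the edge labelled $a$ from $x$ to $xa$ to the edge labelled $a$ from $gx$ to $gxa$, and a point $(e,\mu)$ to $(ge,\mu)$. Out-ball $\overrightarrow{\mathcal{B}}_r(x_0)=\{y:d(x_0,y)\le r\}$, in-ball $\overleftarrow{\mathcal{B}}_r(x_0)=\{y:d(y,x_0)\le r\}$, strong ball $\mathcal{B}_r(x_0)=\overrightarrow{\mathcal{B}}_r(x_0)\cap\overleftarrow{\mathcal{B}}_r(x_0)$. An action by isometries is outward proper if for every out-ball $B$ of finite radius $\{g:B\cap gB\neq\varnothing\}$ is finite, and cocompact if there is a strong ball $B$ of finite radius with $\{gB:g\in G\}$ covering the space. *)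

theory Defs
  imports Complex_Main "HOL-Library.Extended_Real"
begin

definition Rrel :: "'a::monoid_mult \<Rightarrow> 'a \<Rightarrow> bool" where
  "Rrel x y \<longleftrightarrow> range (\<lambda>m. x * m) = range (\<lambda>m. y * m)"

definition Lrel :: "'a::monoid_mult \<Rightarrow> 'a \<Rightarrow> bool" where
  "Lrel x y \<longleftrightarrow> range (\<lambda>m. m * x) = range (\<lambda>m. m * y)"

definition Hrel :: "'a::monoid_mult \<Rightarrow> 'a \<Rightarrow> bool" where
  "Hrel x y \<longleftrightarrow> Rrel x y \<and> Lrel x y"

definition Rclass :: "'a::monoid_mult \<Rightarrow> 'a set" where
  "Rclass x = {y. Rrel x y}"

definition Hclass :: "'a::monoid_mult \<Rightarrow> 'a set" where
  "Hclass x = {y. Hrel x y}"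

definition generates :: "'a::monoid_mult set \<Rightarrow> bool" where
  "generates A \<longleftrightarrow> (\<forall>m. \<exists>xs. set xs \<subseteq> A \<and> m = prod_list xs)"

definition stab :: "'a::monoid_mult set \<Rightarrow> 'a set" where
  "stab H = {s. (\<lambda>h. s * h) ` H = H}"

text \<open>The group Stab(H)/sigma, as the set of sigma-classes.\<close>
definition schG :: "'a::monoid_mult set \<Rightarrow> 'a set set" where
  "schG H = (\<lambda>s. {t \<in> stab H. \<forall>h\<in>H. t * h = s * h}) ` stab H"

definition gact :: "'a::monoid_mult set \<Rightarrow> 'a \<Rightarrow> 'a" where
  "gact g r = (SOME s. s \<in> g) * r"

text \<open>Points: vertices, and points (e, mu) on the edge e from x labelled a (to x*a).\<close>
datatype 'a spoint = Vtx 'a | EPt 'a 'a real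

definition spts :: "'a::monoid_mult set \<Rightarrow> 'a set \<Rightarrow> 'a spoint set" where
  "spts R A = Vtx ` R \<union>
     {EPt x a \<mu> | x a \<mu>. x \<in> R \<and> a \<in> A \<and> x * a \<in> R \<and> 0 < \<mu> \<and> \<mu> < 1}"

definition sstep :: "'a::monoid_mult set \<Rightarrow> 'a set \<Rightarrow> 'a \<Rightarrow> 'a \<Rightarrow> bool" where
  "sstep R A x y \<longleftrightarrow> x \<in> R \<and> y \<in> R \<and> (\<exists>a\<in>A. x * a = y)"

definition vdist :: "'a::monoid_mult set \<Rightarrow> 'a set \<Rightarrow> 'a \<Rightarrow> 'a \<Rightarrow> ereal" where
  "vdist R A x y = (if \<exists>n. (sstep R A ^^ n) x y
      then ereal (real (LEAST n. (sstep R A ^^ n) x y)) else \<infinity>)"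

definition sdist :: "'a::monoid_mult set \<Rightarrow> 'a set \<Rightarrow> 'a spoint \<Rightarrow> 'a spoint \<Rightarrow> ereal" where
  "sdist R A p q = (case p of
      Vtx x \<Rightarrow> (case q of
          Vtx y \<Rightarrow> vdist R A x y
        | EPt y b \<nu> \<Rightarrow> vdist R A x y + ereal \<nu>)
    | EPt x a \<mu> \<Rightarrow> (case q of
          Vtx y \<Rightarrow> ereal (1 - \<mu>) + vdist R A (x * a) y
        | EPt y b \<nu> \<Rightarrow> (if x = y \<and> a = b \<and> \<mu> \<le> \<nu> then ereal (\<nu> - \<mu>)
                         else vdist R A (x * a) y + ereal (1 - \<mu>) + ereal \<nu>)))"

definition spt_act :: "'a::monoid_mult set \<Rightarrow> 'a spoint \<Rightarrow> 'a spoint" where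
  "spt_act g p = (case p of Vtx r \<Rightarrow> Vtx (gact g r) | EPt x a \<mu> \<Rightarrow> EPt (gact g x) a \<mu>)"

definition outball :: "'a::monoid_mult set \<Rightarrow> 'a set \<Rightarrow> 'a spoint \<Rightarrow> real \<Rightarrow> 'a spoint set" where
  "outball R A x0 r = {y \<in> spts R A. sdist R A x0 y \<le> ereal r}"

definition inball :: "'a::monoid_mult set \<Rightarrow> 'a set \<Rightarrow> 'a spoint \<Rightarrow> real \<Rightarrow> 'a spoint set" where
  "inball R A x0 r = {y \<in> spts R A. sdist R A y x0 \<le> ereal r}"

definition strongball :: "'a::monoid_mult set \<Rightarrow> 'a set \<Rightarrow> 'a spoint \<Rightarrow> real \<Rightarrow> 'a spoint set" where
  "strongball R A x0 r = outball R A x0 r \<inter> inball R A x0 r"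

end

theory Submission
  imports Defs
begin

definition cls :: "'a::monoid_mult set \<Rightarrow> 'a \<Rightarrow> 'a set" where
  "cls H s = {t \<in> stab H. \<forall>h\<in>H. t * h = s * h}"

lemma schG_cls: "schG H = cls H ` stab H"
  unfolding schG_def cls_def by simp

lemma Rrel_iff: "Rrel x y \<longleftrightarrow> (\<exists>u. y = x*u) \<and> (\<exists>v. x = y*v)"
proof
  assume "Rrel x y"
  then have e: "range (\<lambda>m. x * m) = range (\<lambda>m. y * m)" unfolding Rrel_def .
  have "y \<in> range (\<lambda>m. x * m)" using e by (metis mult_1_right rangeI)
  moreover have "x \<in> range (\<lambda>m. y * m)" using e by (metis mult_1_right rangeI)
  ultimately show "(\<exists>u. y = x*u) \<and> (\<exists>v. x = y*v)" by auto
next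
  assume "(\<exists>u. y = x*u) \<and> (\<exists>v. x = y*v)"
  then obtain u v where u: "y = x*u" and v: "x = y*v" by auto
  show "Rrel x y" unfolding Rrel_def
  proof (intro equalityI subsetI)
    fix z assume "z \<in> range (\<lambda>m. x * m)"
    then obtain m where "z = x*m" by auto
    then have "z = y*(v*m)" using v by (simp add: mult.assoc)
    then show "z \<in> range (\<lambda>m. y * m)" by auto
  next
    fix z assume "z \<in> range (\<lambda>m. y * m)"
    then obtain m where "z = y*m" by auto
    then have "z = x*(u*m)" using u by (simp add: mult.assoc)
    then show "z \<in> range (\<lambda>m. x * m)" by auto
  qed
qed

lemma Lrel_iff: "Lrel x y \<longleftrightarrow> (\<exists>u. y = u*x) \<and> (\<exists>v. x = v*y)"
proof
  assume "Lrel x y"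
  then have e: "range (\<lambda>m. m * x) = range (\<lambda>m. m * y)" unfolding Lrel_def .
  have "y \<in> range (\<lambda>m. m * x)" using e by (metis mult_1_left rangeI)
  moreover have "x \<in> range (\<lambda>m. m * y)" using e by (metis mult_1_left rangeI)
  ultimately show "(\<exists>u. y = u*x) \<and> (\<exists>v. x = v*y)" by auto
next
  assume "(\<exists>u. y = u*x) \<and> (\<exists>v. x = v*y)"
  then obtain u v where u: "y = u*x" and v: "x = v*y" by auto
  show "Lrel x y" unfolding Lrel_def
  proof (intro equalityI subsetI)
    fix z assume "z \<in> range (\<lambda>m. m * x)"
    then obtain m where "z = m*x" by auto
    then have "z = (m*v)*y" using v by (simp add: mult.assoc)
    then show "z \<in> range (\<lambda>m. m * y)" by auto
  next
    fix z assume "z \<in> range (\<lambda>m. m * y)"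
    then obtain m where "z = m*y" by auto
    then have "z = (m*u)*x" using u by (simp add: mult.assoc)
    then show "z \<in> range (\<lambda>m. m * x)" by auto
  qed
qed

lemma Rrel_trans: "Rrel x y \<Longrightarrow> Rrel y z \<Longrightarrow> Rrel x z" unfolding Rrel_def by simp
lemma Rrel_sym: "Rrel x y \<Longrightarrow> Rrel y x" unfolding Rrel_def by simp
lemma Lrel_trans: "Lrel x y \<Longrightarrow> Lrel y z \<Longrightarrow> Lrel x z" unfolding Lrel_def by simp
lemma Lrel_sym: "Lrel x y \<Longrightarrow> Lrel y x" unfolding Lrel_def by simp

lemma inR: "y \<in> Rclass x \<longleftrightarrow> Rrel x y" unfolding Rclass_def by simp
lemma inH: "y \<in> Hclass x \<longleftrightarrow> Rrel x y \<and> Lrel x y" unfolding Hclass_def Hrel_def by simp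

lemma x0_H: "x0 \<in> Hclass x0" unfolding inH Rrel_def Lrel_def by simp
lemma x0_R: "x0 \<in> Rclass x0" unfolding inR Rrel_def by simp
lemma H_R: "y \<in> Hclass x \<Longrightarrow> y \<in> Rclass x" unfolding inH inR by simp

lemma R_two: "y \<in> Rclass x \<Longrightarrow> z \<in> Rclass x \<Longrightarrow> \<exists>u. z = y*u"
  unfolding inR by (meson Rrel_iff Rrel_sym Rrel_trans)

lemma R_right: "y \<in> Rclass x \<Longrightarrow> z = y * u \<Longrightarrow> y = z * v \<Longrightarrow> z \<in> Rclass x"
  unfolding inR by (meson Rrel_iff Rrel_trans)

lemma perm_stab:
  fixes x0 :: "'a::monoid_mult"
  assumes u: "u \<in> Rclass x0" and v: "v \<in> Rclass x0" and vk: "v = k*u" and uk: "u = k'*v"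
  shows "k \<in> stab (Hclass x0) \<and> k' \<in> stab (Hclass x0) \<and>
    (\<forall>x\<in>Rclass x0. k'*(k*x) = x \<and> k*(k'*x) = x \<and> k*x \<in> Rclass x0 \<and> k'*x \<in> Rclass x0)"
proof -
  have P: "k'*(k*x) = x \<and> k*(k'*x) = x \<and> k*x \<in> Rclass x0 \<and> k'*x \<in> Rclass x0"
    if x: "x \<in> Rclass x0" for x
  proof -
    obtain w where w: "x = u*w" using R_two[OF u x] by auto
    obtain w' where w': "x = v*w'" using R_two[OF v x] by auto
    obtain z where z: "u = x*z" using R_two[OF x u] by auto
    obtain z' where z': "v = x*z'" using R_two[OF x v] by auto
    have ku: "k'*(k*u) = u" by (simp only: vk[symmetric] uk[symmetric])
    have kv: "k*(k'*v) = v" by (simp only: vk[symmetric] uk[symmetric])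
    have 1: "k'*(k*x) = x"
    proof -
      have "k'*(k*x) = (k'*(k*u))*w" by (simp only: w mult.assoc)
      then show ?thesis using ku w by simp
    qed
    have 2: "k*(k'*x) = x"
    proof -
      have "k*(k'*x) = (k*(k'*v))*w'" by (simp only: w' mult.assoc)
      then show ?thesis using kv w' by simp
    qed
    have 3: "k*x \<in> Rclass x0"
    proof (rule R_right[OF v, of "k*x" w z])
      show "k*x = v*w" by (simp only: w vk mult.assoc)
      have "k*x*z = k*u" by (simp only: z mult.assoc)
      then show "v = k*x*z" using vk by simp
    qed
    have 4: "k'*x \<in> Rclass x0"
    proof (rule R_right[OF u, of "k'*x" w' z'])
      show "k'*x = u*w'" by (simp only: w' uk mult.assoc)
      have "k'*x*z' = k'*v" by (simp only: z' mult.assoc)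
      then show "u = k'*x*z'" using uk by simp
    qed
    show ?thesis using 1 2 3 4 by blast
  qed
  have L1: "Lrel x (k*x)" if "x \<in> Rclass x0" for x
    unfolding Lrel_iff using P[OF that] by metis
  have L2: "Lrel x (k'*x)" if "x \<in> Rclass x0" for x
    unfolding Lrel_iff using P[OF that] by metis
  have sk: "k \<in> stab (Hclass x0)"
    unfolding stab_def
  proof (safe)
    fix y assume y: "y \<in> Hclass x0"
    then have yR: "y \<in> Rclass x0" by (rule H_R)
    show "k*y \<in> Hclass x0"
    proof -
      have "Lrel x0 (k*y)" using y L1[OF yR] Lrel_trans unfolding inH by blast
      moreover have "Rrel x0 (k*y)" using P[OF yR] unfolding inR by blast
      ultimately show "k*y \<in> Hclass x0" unfolding inH by blast
    qed
    have "k'*y \<in> Hclass x0"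
    proof -
      have "Lrel x0 (k'*y)" using y L2[OF yR] Lrel_trans unfolding inH by blast
      moreover have "Rrel x0 (k'*y)" using P[OF yR] unfolding inR by blast
      ultimately show "k'*y \<in> Hclass x0" unfolding inH by blast
    qed
    then show "y \<in> (\<lambda>h. k*h) ` Hclass x0" using P[OF yR] by (metis image_eqI)
  qed
  have sk': "k' \<in> stab (Hclass x0)"
    unfolding stab_def
  proof (safe)
    fix y assume y: "y \<in> Hclass x0"
    then have yR: "y \<in> Rclass x0" by (rule H_R)
    show "k'*y \<in> Hclass x0"
    proof -
      have "Lrel x0 (k'*y)" using y L2[OF yR] Lrel_trans unfolding inH by blast
      moreover have "Rrel x0 (k'*y)" using P[OF yR] unfolding inR by blast
      ultimately show "k'*y \<in> Hclass x0" unfolding inH by blast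
    qed
    have "k*y \<in> Hclass x0"
    proof -
      have "Lrel x0 (k*y)" using y L1[OF yR] Lrel_trans unfolding inH by blast
      moreover have "Rrel x0 (k*y)" using P[OF yR] unfolding inR by blast
      ultimately show "k*y \<in> Hclass x0" unfolding inH by blast
    qed
    then show "y \<in> (\<lambda>h. k'*h) ` Hclass x0" using P[OF yR] by (metis image_eqI)
  qed
  show ?thesis using sk sk' P by blast
qed


lemma stab_inv:
  fixes x0 :: "'a::monoid_mult"
  assumes s: "s \<in> stab (Hclass x0)"
  shows "\<exists>k\<in>stab (Hclass x0). \<forall>x\<in>Rclass x0. k*(s*x) = x \<and> s*(k*x) = x \<and> s*x \<in> Rclass x0 \<and> k*x \<in> Rclass x0"
proof -
  have "s*x0 \<in> Hclass x0" using s x0_H unfolding stab_def by blast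
  then have sH: "s*x0 \<in> Rclass x0" and L: "Lrel x0 (s*x0)" using H_R inH by blast+
  obtain k where k: "x0 = k*(s*x0)" using L unfolding Lrel_iff by blast
  from perm_stab[OF x0_R sH refl k] show ?thesis by blast
qed

lemma gact_cls:
  fixes x0 :: "'a::monoid_mult"
  assumes s: "s \<in> stab (Hclass x0)" and x: "x \<in> Rclass x0"
  shows "gact (cls (Hclass x0) s) x = s*x"
proof -
  have "s \<in> cls (Hclass x0) s" using s unfolding cls_def by simp
  then have t: "(SOME t. t \<in> cls (Hclass x0) s) \<in> cls (Hclass x0) s" by (rule someI)
  define t where "t = (SOME t. t \<in> cls (Hclass x0) s)"
  have tx0: "t*x0 = s*x0" using t x0_H unfolding t_def cls_def by blast
  obtain m where m: "x = x0*m" using R_two[OF x0_R x] by blast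
  have "t*x = s*x" using tx0 m by (simp add: mult.assoc[symmetric])
  then show ?thesis unfolding gact_def t_def .
qed

lemma cls_eq:
  fixes x0 :: "'a::monoid_mult"
  assumes x: "x \<in> Rclass x0" and e: "s*x = t*x"
  shows "cls (Hclass x0) s = cls (Hclass x0) t"
proof -
  obtain m where m: "x0 = x*m" using R_two[OF x x0_R] by blast
  have e0: "s*x0 = t*x0" using e m by (simp add: mult.assoc[symmetric])
  have "s*h = t*h" if h: "h \<in> Hclass x0" for h
  proof -
    obtain n where n: "h = x0*n" using R_two[OF x0_R H_R[OF h]] by blast
    show ?thesis using e0 n by (simp add: mult.assoc[symmetric])
  qed
  then show ?thesis unfolding cls_def by auto
qed

lemma Hclass_act:
  fixes x0 :: "'a::monoid_mult"
  assumes s: "s \<in> stab (Hclass x0)" and x: "x \<in> Rclass x0"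
  shows "Hclass (s*x) = Hclass x"
proof -
  obtain k where k: "\<forall>x\<in>Rclass x0. k*(s*x) = x \<and> s*(k*x) = x \<and> s*x \<in> Rclass x0 \<and> k*x \<in> Rclass x0"
    using stab_inv[OF s] by blast
  have sx: "s*x \<in> Rclass x0" using x k by blast
  have kx: "k*(s*x) = x" using x k by blast
  have R1: "Rrel x (s*x)" using Rrel_trans[OF Rrel_sym] x sx unfolding inR by blast
  have L1: "Lrel x (s*x)" unfolding Lrel_iff using kx by metis
  have "Rrel (s*x) = Rrel x"
  proof
    fix z show "Rrel (s*x) z = Rrel x z" using R1 unfolding Rrel_def by simp
  qed
  moreover have "Lrel (s*x) = Lrel x"
  proof
    fix z show "Lrel (s*x) z = Lrel x z" using L1 unfolding Lrel_def by simp
  qed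
  ultimately show ?thesis unfolding Hclass_def Hrel_def by simp
qed

lemma sstep_act:
  fixes x0 :: "'a::monoid_mult"
  assumes s: "s \<in> stab (Hclass x0)" and st: "sstep (Rclass x0) A x y"
  shows "sstep (Rclass x0) A (s*x) (s*y)"
proof -
  obtain k where k: "\<forall>x\<in>Rclass x0. k*(s*x) = x \<and> s*(k*x) = x \<and> s*x \<in> Rclass x0 \<and> k*x \<in> Rclass x0"
    using stab_inv[OF s] by blast
  from st obtain a where "x \<in> Rclass x0" "y \<in> Rclass x0" "a \<in> A" "x*a = y"
    unfolding sstep_def by blast
  then show ?thesis unfolding sstep_def using k by (auto simp: mult.assoc)
qed

lemma relpow_map:
  assumes f: "\<And>x y. P x y \<Longrightarrow> P (f x) (f y)"
  shows "(P^^n) x y \<Longrightarrow> (P^^n) (f x) (f y)"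
proof (induction n arbitrary: y)
  case 0
  then show ?case by simp
next
  case (Suc n)
  from Suc.prems obtain z where "(P^^n) x z" "P z y" by (rule relpowp_Suc_E)
  then show ?case using Suc.IH f by (meson relpowp_Suc_I)
qed

lemma vdist_act:
  fixes x0 :: "'a::monoid_mult"
  assumes s: "s \<in> stab (Hclass x0)" and x: "x \<in> Rclass x0" and y: "y \<in> Rclass x0"
  shows "vdist (Rclass x0) A (s*x) (s*y) = vdist (Rclass x0) A x y"
proof -
  obtain k where kS: "k \<in> stab (Hclass x0)" and
    k: "\<forall>x\<in>Rclass x0. k*(s*x) = x \<and> s*(k*x) = x \<and> s*x \<in> Rclass x0 \<and> k*x \<in> Rclass x0"
    using stab_inv[OF s] by blast
  have "((sstep (Rclass x0) A)^^n) (s*x) (s*y) \<longleftrightarrow> ((sstep (Rclass x0) A)^^n) x y" for n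
  proof
    assume "((sstep (Rclass x0) A)^^n) (s*x) (s*y)"
    from relpow_map[of "sstep (Rclass x0) A" "\<lambda>z. k*z", OF sstep_act[OF kS] this]
    show "((sstep (Rclass x0) A)^^n) x y" using k x y by simp
  next
    assume "((sstep (Rclass x0) A)^^n) x y"
    from relpow_map[of "sstep (Rclass x0) A" "\<lambda>z. s*z", OF sstep_act[OF s] this]
    show "((sstep (Rclass x0) A)^^n) (s*x) (s*y)" .
  qed
  then show ?thesis unfolding vdist_def by simp
qed

definition sa :: "'a::monoid_mult \<Rightarrow> 'a spoint \<Rightarrow> 'a spoint" where
  "sa s p = (case p of Vtx r \<Rightarrow> Vtx (s*r) | EPt x a \<mu> \<Rightarrow> EPt (s*x) a \<mu>)"

lemma spts_Vtx: "Vtx r \<in> spts R A \<longleftrightarrow> r \<in> R" unfolding spts_def by auto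
lemma spts_EPt: "EPt x a \<mu> \<in> spts R A \<longleftrightarrow> x \<in> R \<and> a \<in> A \<and> x*a \<in> R \<and> 0 < \<mu> \<and> \<mu> < 1"
  unfolding spts_def by auto

lemma spt_act_cls:
  fixes x0 :: "'a::monoid_mult"
  assumes s: "s \<in> stab (Hclass x0)" and p: "p \<in> spts (Rclass x0) A"
  shows "spt_act (cls (Hclass x0) s) p = sa s p"
  using p gact_cls[OF s] unfolding spt_act_def sa_def
  by (cases p) (auto simp: spts_Vtx spts_EPt)

lemma sa_spts:
  fixes x0 :: "'a::monoid_mult"
  assumes s: "s \<in> stab (Hclass x0)" and p: "p \<in> spts (Rclass x0) A"
  shows "sa s p \<in> spts (Rclass x0) A"
proof -
  obtain k where k: "\<forall>x\<in>Rclass x0. k*(s*x) = x \<and> s*(k*x) = x \<and> s*x \<in> Rclass x0 \<and> k*x \<in> Rclass x0"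
    using stab_inv[OF s] by blast
  show ?thesis using p k unfolding sa_def
    by (cases p) (auto simp: spts_Vtx spts_EPt mult.assoc[symmetric])
qed

lemma sdist_sa:
  fixes x0 :: "'a::monoid_mult"
  assumes s: "s \<in> stab (Hclass x0)" and p: "p \<in> spts (Rclass x0) A" and q: "q \<in> spts (Rclass x0) A"
  shows "sdist (Rclass x0) A (sa s p) (sa s q) = sdist (Rclass x0) A p q"
proof -
  obtain k where k: "\<forall>x\<in>Rclass x0. k*(s*x) = x \<and> s*(k*x) = x \<and> s*x \<in> Rclass x0 \<and> k*x \<in> Rclass x0"
    using stab_inv[OF s] by blast
  have inj: "s*x = s*y \<longleftrightarrow> x = y" if "x \<in> Rclass x0" "y \<in> Rclass x0" for x y
    using k that by metis
  have va: "vdist (Rclass x0) A (s*x*a) (s*y) = vdist (Rclass x0) A (x*a) y"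
    if "x*a \<in> Rclass x0" "y \<in> Rclass x0" for x a y
    using vdist_act[OF s that] by (simp add: mult.assoc)
  show ?thesis
  proof (cases p)
    case (Vtx x)
    then have x: "x \<in> Rclass x0" using p spts_Vtx by blast
    show ?thesis
    proof (cases q)
      case (Vtx y)
      then show ?thesis using q x \<open>p = Vtx x\<close> vdist_act[OF s] by (simp add: sa_def sdist_def spts_Vtx)
    next
      case (EPt y b \<nu>)
      then show ?thesis using q x \<open>p = Vtx x\<close> vdist_act[OF s] by (simp add: sa_def sdist_def spts_EPt)
    qed
  next
    case (EPt x a \<mu>)
    then have x: "x \<in> Rclass x0" "x*a \<in> Rclass x0" using p spts_EPt by blast+
    show ?thesis
    proof (cases q)
      case (Vtx y)
      then show ?thesis using q x \<open>p = EPt x a \<mu>\<close> va by (simp add: sa_def sdist_def spts_Vtx)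
    next
      case (EPt y b \<nu>)
      then have y: "y \<in> Rclass x0" using q spts_EPt by blast
      show ?thesis using y x \<open>q = EPt y b \<nu>\<close> \<open>p = EPt x a \<mu>\<close> va inj by (simp add: sa_def sdist_def)
    qed
  qed
qed

lemma part1:
  fixes x0 :: "'a::monoid_mult"
  assumes g: "g \<in> schG (Hclass x0)"
  shows "bij_betw (spt_act g) (spts (Rclass x0) A) (spts (Rclass x0) A) \<and>
    (\<forall>p\<in>spts (Rclass x0) A. \<forall>q\<in>spts (Rclass x0) A.
       sdist (Rclass x0) A (spt_act g p) (spt_act g q) = sdist (Rclass x0) A p q)"
proof -
  obtain s where s: "s \<in> stab (Hclass x0)" and gs: "g = cls (Hclass x0) s"
    using g unfolding schG_cls by blast
  obtain k where kS: "k \<in> stab (Hclass x0)" and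
    k: "\<forall>x\<in>Rclass x0. k*(s*x) = x \<and> s*(k*x) = x \<and> s*x \<in> Rclass x0 \<and> k*x \<in> Rclass x0"
    using stab_inv[OF s] by blast
  have "bij_betw (sa s) (spts (Rclass x0) A) (spts (Rclass x0) A)"
  proof (rule bij_betw_byWitness[where f'="sa k"])
    show "\<forall>p\<in>spts (Rclass x0) A. sa k (sa s p) = p"
    proof
      fix p assume "p \<in> spts (Rclass x0) A"
      then show "sa k (sa s p) = p" using k
        by (cases p) (auto simp: sa_def spts_Vtx spts_EPt mult.assoc[symmetric])
    qed
    show "\<forall>p\<in>spts (Rclass x0) A. sa s (sa k p) = p"
    proof
      fix p assume "p \<in> spts (Rclass x0) A"
      then show "sa s (sa k p) = p" using k
        by (cases p) (auto simp: sa_def spts_Vtx spts_EPt mult.assoc[symmetric])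
    qed
    show "sa s ` spts (Rclass x0) A \<subseteq> spts (Rclass x0) A" using sa_spts[OF s] by blast
    show "sa k ` spts (Rclass x0) A \<subseteq> spts (Rclass x0) A" using sa_spts[OF kS] by blast
  qed
  then have "bij_betw (spt_act g) (spts (Rclass x0) A) (spts (Rclass x0) A)"
    using bij_betw_cong[of "spts (Rclass x0) A" "spt_act g" "sa s"] spt_act_cls[OF s] gs by simp
  then show ?thesis using spt_act_cls[OF s] sdist_sa[OF s] gs by simp
qed


definition bv :: "'a spoint \<Rightarrow> 'a" where
  "bv p = (case p of Vtx x \<Rightarrow> x | EPt x a \<mu> \<Rightarrow> x)"

definition ev :: "'a::monoid_mult spoint \<Rightarrow> 'a" where
  "ev p = (case p of Vtx x \<Rightarrow> x | EPt x a \<mu> \<Rightarrow> x*a)"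

lemma bv_act: "bv (spt_act g p) = gact g (bv p)"
  unfolding bv_def spt_act_def by (cases p) auto

lemma bv_spts: "p \<in> spts R A \<Longrightarrow> bv p \<in> R"
  unfolding bv_def by (cases p) (auto simp: spts_Vtx spts_EPt)

lemma vdist_le:
  assumes "vdist R A w y \<le> ereal r"
  shows "\<exists>n. real n \<le> r \<and> ((sstep R A)^^n) w y"
proof (cases "\<exists>n. ((sstep R A)^^n) w y")
  case True
  define L where "L = (LEAST n. ((sstep R A)^^n) w y)"
  have "((sstep R A)^^L) w y" unfolding L_def using True by (rule LeastI_ex)
  moreover have "real L \<le> r" using assms True unfolding vdist_def L_def by simp
  ultimately show ?thesis by blast
next
  case False
  then show ?thesis using assms unfolding vdist_def by simp
qed

lemma reach_list:
  "((sstep R A)^^n) w y \<Longrightarrow> \<exists>xs. set xs \<subseteq> A \<and> length xs = n \<and> y = w * prod_list xs"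
proof (induction n arbitrary: y)
  case 0
  then show ?case by (intro exI[of _ "[]"]) simp
next
  case (Suc n)
  from Suc.prems obtain z where z: "((sstep R A)^^n) w z" "sstep R A z y" by (rule relpowp_Suc_E)
  obtain xs where xs: "set xs \<subseteq> A" "length xs = n" "z = w * prod_list xs" using Suc.IH[OF z(1)] by blast
  obtain a where a: "a \<in> A" "z*a = y" using z(2) unfolding sstep_def by blast
  show ?case
    by (rule exI[of _ "xs @ [a]"]) (use xs a in \<open>simp add: mult.assoc\<close>)
qed

definition Reach :: "'a::monoid_mult set \<Rightarrow> 'a \<Rightarrow> nat \<Rightarrow> 'a set" where
  "Reach A w N = (\<lambda>xs. w * prod_list xs) ` {xs. set xs \<subseteq> A \<and> length xs \<le> N}"

lemma finite_Reach: "finite A \<Longrightarrow> finite (Reach A w N)"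
  unfolding Reach_def by (intro finite_imageI finite_lists_length_le)

lemma vdist_Reach:
  assumes "vdist R A w y \<le> ereal r"
  shows "y \<in> Reach A w (nat \<lceil>r\<rceil>)"
proof -
  obtain n where n: "real n \<le> r" "((sstep R A)^^n) w y" using vdist_le[OF assms] by blast
  obtain xs where xs: "set xs \<subseteq> A" "length xs = n" "y = w * prod_list xs" using reach_list[OF n(2)] by blast
  have "n \<le> nat \<lceil>r\<rceil>" using n(1) by linarith
  then show ?thesis unfolding Reach_def using xs by auto
qed

lemma ereal_add_nonneg_le: "a + ereal t \<le> ereal r \<Longrightarrow> 0 \<le> t \<Longrightarrow> a \<le> ereal r"
  by (cases a) auto

lemma ereal_add_nonneg_le2: "ereal t + a \<le> ereal r \<Longrightarrow> 0 \<le> t \<Longrightarrow> a \<le> ereal r"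
  by (cases a) auto

lemma ereal_add_nonneg_le3: "a + ereal t + ereal t' \<le> ereal r \<Longrightarrow> 0 \<le> t \<Longrightarrow> 0 \<le> t' \<Longrightarrow> a \<le> ereal r"
  by (cases a) auto

lemma ball_bv:
  assumes p0: "p0 \<in> spts R A" and q: "q \<in> outball R A p0 r"
  shows "bv q \<in> {bv p0} \<union> Reach A (bv p0) (nat \<lceil>r\<rceil>) \<union> Reach A (ev p0) (nat \<lceil>r\<rceil>)"
proof -
  have qs: "q \<in> spts R A" and d: "sdist R A p0 q \<le> ereal r" using q unfolding outball_def by auto
  show ?thesis
  proof (cases p0)
    case (Vtx z)
    show ?thesis
    proof (cases q)
      case (Vtx y)
      then have "sdist R A p0 q = vdist R A z y" using \<open>p0 = Vtx z\<close> unfolding sdist_def by simp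
        then have "vdist R A z y \<le> ereal r" using d by (simp only:)
      then have "y \<in> Reach A z (nat \<lceil>r\<rceil>)" by (rule vdist_Reach)
      then show ?thesis using \<open>p0 = Vtx z\<close> \<open>q = Vtx y\<close> by (simp add: bv_def)
    next
      case (EPt y b \<nu>)
      have "0 < \<nu>" using qs unfolding \<open>q = EPt y b \<nu>\<close> spts_EPt by blast
      then have nu: "0 \<le> \<nu>" by simp
      have "sdist R A p0 q = vdist R A z y + ereal \<nu>" using \<open>p0 = Vtx z\<close> \<open>q = EPt y b \<nu>\<close> unfolding sdist_def by simp
        then have "vdist R A z y + ereal \<nu> \<le> ereal r" using d by (simp only:)
      then have "vdist R A z y \<le> ereal r" using nu by (rule ereal_add_nonneg_le)
      then have "y \<in> Reach A z (nat \<lceil>r\<rceil>)" by (rule vdist_Reach)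
      then show ?thesis using \<open>p0 = Vtx z\<close> \<open>q = EPt y b \<nu>\<close> by (simp add: bv_def)
    qed
  next
    case (EPt z a \<mu>)
    have "\<mu> < 1" using p0 unfolding \<open>p0 = EPt z a \<mu>\<close> spts_EPt by blast
    then have mu: "0 \<le> 1 - \<mu>" by simp
    show ?thesis
    proof (cases q)
      case (Vtx y)
      have "sdist R A p0 q = ereal (1 - \<mu>) + vdist R A (z*a) y" using \<open>p0 = EPt z a \<mu>\<close> \<open>q = Vtx y\<close> unfolding sdist_def by simp
        then have "ereal (1 - \<mu>) + vdist R A (z*a) y \<le> ereal r" using d by (simp only:)
      then have "vdist R A (z*a) y \<le> ereal r" using mu by (rule ereal_add_nonneg_le2)
      then have "y \<in> Reach A (z*a) (nat \<lceil>r\<rceil>)" by (rule vdist_Reach)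
      then show ?thesis using \<open>p0 = EPt z a \<mu>\<close> \<open>q = Vtx y\<close> by (simp add: bv_def ev_def)
    next
      case (EPt y b \<nu>)
      have "0 < \<nu>" using qs unfolding \<open>q = EPt y b \<nu>\<close> spts_EPt by blast
      then have nu: "0 \<le> \<nu>" by simp
      show ?thesis
      proof (cases "z = y \<and> a = b \<and> \<mu> \<le> \<nu>")
        case True
        then show ?thesis using \<open>p0 = EPt z a \<mu>\<close> \<open>q = EPt y b \<nu>\<close> by (simp add: bv_def)
      next
        case False
        have "sdist R A p0 q = vdist R A (z*a) y + ereal (1 - \<mu>) + ereal \<nu>" unfolding sdist_def \<open>p0 = EPt z a \<mu>\<close> \<open>q = EPt y b \<nu>\<close> spoint.case if_not_P[OF False] by (rule refl)
        then have "vdist R A (z*a) y + ereal (1 - \<mu>) + ereal \<nu> \<le> ereal r" using d by (simp only:)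
        then have "vdist R A (z*a) y \<le> ereal r" using mu nu by (rule ereal_add_nonneg_le3)
        then have "y \<in> Reach A (z*a) (nat \<lceil>r\<rceil>)" by (rule vdist_Reach)
        then show ?thesis using \<open>p0 = EPt z a \<mu>\<close> \<open>q = EPt y b \<nu>\<close> by (simp add: bv_def ev_def)
      qed
    qed
  qed
qed

lemma part2:
  fixes x0 :: "'a::monoid_mult"
  assumes A: "finite A" and p0: "p0 \<in> spts (Rclass x0) A"
  shows "finite {g \<in> schG (Hclass x0). outball (Rclass x0) A p0 r \<inter> spt_act g ` outball (Rclass x0) A p0 r \<noteq> {}}"
proof -
  define F where "F = {bv p0} \<union> Reach A (bv p0) (nat \<lceil>r\<rceil>) \<union> Reach A (ev p0) (nat \<lceil>r\<rceil>)"
  have fF: "finite F" unfolding F_def using finite_Reach[OF A] by simp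
  define \<phi> where "\<phi> = (\<lambda>(x,y). THE g. g \<in> schG (Hclass x0) \<and> gact g x = y)"
  have "{g \<in> schG (Hclass x0). outball (Rclass x0) A p0 r \<inter> spt_act g ` outball (Rclass x0) A p0 r \<noteq> {}}
        \<subseteq> \<phi> ` ((F \<inter> Rclass x0) \<times> F)"
  proof
    fix g assume "g \<in> {g \<in> schG (Hclass x0). outball (Rclass x0) A p0 r \<inter> spt_act g ` outball (Rclass x0) A p0 r \<noteq> {}}"
    then have g: "g \<in> schG (Hclass x0)" and
      ne: "outball (Rclass x0) A p0 r \<inter> spt_act g ` outball (Rclass x0) A p0 r \<noteq> {}" by auto
    then obtain p where p: "p \<in> outball (Rclass x0) A p0 r" and gp: "spt_act g p \<in> outball (Rclass x0) A p0 r"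
      by blast
    have pR: "bv p \<in> Rclass x0" using p bv_spts unfolding outball_def by blast
    have pF: "bv p \<in> F" using ball_bv[OF p0 p] unfolding F_def .
    have qF: "gact g (bv p) \<in> F" using ball_bv[OF p0 gp] unfolding F_def bv_act .
    obtain s where s: "s \<in> stab (Hclass x0)" and gs: "g = cls (Hclass x0) s"
      using g unfolding schG_cls by blast
    have uniq: "(THE g'. g' \<in> schG (Hclass x0) \<and> gact g' (bv p) = gact g (bv p)) = g"
    proof (rule the_equality)
      show "g \<in> schG (Hclass x0) \<and> gact g (bv p) = gact g (bv p)" using g by simp
    next
      fix g' assume g': "g' \<in> schG (Hclass x0) \<and> gact g' (bv p) = gact g (bv p)"
      then obtain t where t: "t \<in> stab (Hclass x0)" and gt: "g' = cls (Hclass x0) t"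
        unfolding schG_cls by blast
      have "t * bv p = s * bv p" using g' gact_cls[OF t pR] gact_cls[OF s pR] gt gs by simp
      then show "g' = g" using cls_eq[OF pR] gt gs by blast
    qed
    show "g \<in> \<phi> ` ((F \<inter> Rclass x0) \<times> F)"
      by (rule image_eqI[of _ _ "(bv p, gact g (bv p))"]) (use uniq pR pF qF in \<open>auto simp: \<phi>_def\<close>)
  qed
  moreover have "finite (\<phi> ` ((F \<inter> Rclass x0) \<times> F))" using fF by simp
  ultimately show ?thesis by (rule finite_subset)
qed


lemma path:
  fixes x0 :: "'a::monoid_mult"
  shows "w \<in> Rclass x0 \<Longrightarrow> set xs \<subseteq> A \<Longrightarrow> w * prod_list xs \<in> Rclass x0 \<Longrightarrow>
    ((sstep (Rclass x0) A)^^(length xs)) w (w * prod_list xs)"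
proof (induction xs arbitrary: w)
  case Nil
  then show ?case by simp
next
  case (Cons a xs)
  have wR: "w \<in> Rclass x0" and a: "a \<in> A" and xsA: "set xs \<subseteq> A" using Cons.prems by auto
  have zR: "w * (a * prod_list xs) \<in> Rclass x0" using Cons.prems(3) by simp
  obtain u where u: "w = w * (a * prod_list xs) * u" using R_two[OF zR wR] by blast
  have waR: "w*a \<in> Rclass x0"
  proof (rule R_right[OF wR, of "w*a" a "prod_list xs * u"])
    show "w*a = w*a" by simp
    show "w = w*a*(prod_list xs * u)" using u by (simp add: mult.assoc)
  qed
  have st: "sstep (Rclass x0) A w (w*a)" unfolding sstep_def using wR waR a by blast
  have "((sstep (Rclass x0) A)^^(length xs)) (w*a) (w*a * prod_list xs)"
    using Cons.IH[OF waR xsA] zR by (simp add: mult.assoc)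
  from relpowp_Suc_I2[OF st this] show ?case by (simp add: mult.assoc)
qed

lemma conn:
  fixes x0 :: "'a::monoid_mult"
  assumes gen: "generates A" and w: "w \<in> Rclass x0" and z: "z \<in> Rclass x0"
  shows "\<exists>n. ((sstep (Rclass x0) A)^^n) w z"
proof -
  obtain u where u: "z = w*u" using R_two[OF w z] by blast
  obtain xs where xs: "set xs \<subseteq> A" "u = prod_list xs" using gen unfolding generates_def by blast
  show ?thesis using path[OF w xs(1)] u xs z by blast
qed

lemma vdist_fin:
  fixes x0 :: "'a::monoid_mult"
  assumes gen: "generates A" and w: "w \<in> Rclass x0" and z: "z \<in> Rclass x0"
  shows "vdist (Rclass x0) A w z = ereal (real (LEAST n. ((sstep (Rclass x0) A)^^n) w z))"
  using conn[OF gen w z] unfolding vdist_def by simp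

lemma part3a:
  fixes x0 :: "'a::monoid_mult"
  assumes A: "finite A" and p0: "p0 \<in> spts (Rclass x0) A"
    and cov: "spts (Rclass x0) A \<subseteq> (\<Union>g\<in>schG (Hclass x0). spt_act g ` strongball (Rclass x0) A p0 r)"
  shows "finite {Hclass y | y. y \<in> Rclass x0}"
proof -
  define F where "F = {bv p0} \<union> Reach A (bv p0) (nat \<lceil>r\<rceil>) \<union> Reach A (ev p0) (nat \<lceil>r\<rceil>)"
  have fF: "finite F" unfolding F_def using finite_Reach[OF A] by simp
  have "{Hclass y | y. y \<in> Rclass x0} \<subseteq> Hclass ` F"
  proof
    fix c assume "c \<in> {Hclass y | y. y \<in> Rclass x0}"
    then obtain y where y: "y \<in> Rclass x0" and c: "c = Hclass y" by blast
    have "Vtx y \<in> spts (Rclass x0) A" using y spts_Vtx by blast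
    then obtain g p where g: "g \<in> schG (Hclass x0)" and p: "p \<in> strongball (Rclass x0) A p0 r"
      and yp: "Vtx y = spt_act g p" using cov by blast
    have po: "p \<in> outball (Rclass x0) A p0 r" using p unfolding strongball_def by blast
    have pR: "bv p \<in> Rclass x0" using po bv_spts unfolding outball_def by blast
    have pF: "bv p \<in> F" using ball_bv[OF p0 po] unfolding F_def .
    have yg: "y = gact g (bv p)" using arg_cong[OF yp, of bv] bv_act[of g p] by (simp add: bv_def)
    obtain s where s: "s \<in> stab (Hclass x0)" and gs: "g = cls (Hclass x0) s"
      using g unfolding schG_cls by blast
    have "y = s * bv p" using yg gact_cls[OF s pR] gs by simp
    then have "Hclass y = Hclass (bv p)" using Hclass_act[OF s pR] by simp
    then show "c \<in> Hclass ` F" using c pF by blast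
  qed
  then show ?thesis using fF finite_subset by blast
qed

lemma part3b:
  fixes x0 :: "'a::monoid_mult"
  assumes A: "finite A" and gen: "generates A" and fin: "finite {Hclass y | y. y \<in> Rclass x0}"
  shows "\<exists>p0\<in>spts (Rclass x0) A. \<exists>r::real.
             spts (Rclass x0) A \<subseteq> (\<Union>g\<in>schG (Hclass x0). spt_act g ` strongball (Rclass x0) A p0 r)"
proof -
  define C where "C = {Hclass y | y. y \<in> Rclass x0}"
  define rep where "rep c = (SOME y. y \<in> Rclass x0 \<and> c = Hclass y)" for c
  define Y where "Y = rep ` C"
  have fY: "finite Y" unfolding Y_def C_def using fin by simp
  have repY: "\<exists>y\<in>Y. y \<in> Rclass x0 \<and> Hclass y = Hclass v" if v: "v \<in> Rclass x0" for v
  proof -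
    have cC: "Hclass v \<in> C" unfolding C_def using v by blast
    have "rep (Hclass v) \<in> Rclass x0 \<and> Hclass v = Hclass (rep (Hclass v))"
      unfolding rep_def by (rule someI[of _ v]) (use v in simp)
    then show ?thesis using cC unfolding Y_def by auto
  qed
  have YR: "Y \<subseteq> Rclass x0"
  proof
    fix y assume "y \<in> Y"
    then obtain v where v: "v \<in> Rclass x0" and yv: "y = rep (Hclass v)" unfolding Y_def C_def by blast
    have "rep (Hclass v) \<in> Rclass x0 \<and> Hclass v = Hclass (rep (Hclass v))"
      unfolding rep_def by (rule someI[of _ v]) (use v in simp)
    then show "y \<in> Rclass x0" using yv by simp
  qed
  define dd where "dd w z = (LEAST n. ((sstep (Rclass x0) A)^^n) w z)" for w z
  define S where "S = ((\<lambda>y. dd x0 y) ` Y) \<union> ((\<lambda>y. dd y x0) ` Y) \<union> ((\<lambda>(y,a). dd (y*a) x0) ` (Y \<times> A))"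
  define N where "N = Max S"
  have fS: "finite S" unfolding S_def using fY A by simp
  have N1: "dd x0 y \<le> N" if "y \<in> Y" for y
  proof -
    have "dd x0 y \<in> S" unfolding S_def using that by blast
    then show ?thesis unfolding N_def using Max_ge[OF fS] by blast
  qed
  have N2: "dd y x0 \<le> N" if "y \<in> Y" for y
  proof -
    have "dd y x0 \<in> S" unfolding S_def using that by blast
    then show ?thesis unfolding N_def using Max_ge[OF fS] by blast
  qed
  have N3: "dd (y*a) x0 \<le> N" if "y \<in> Y" "a \<in> A" for y a
  proof -
    have "dd (y*a) x0 \<in> S" unfolding S_def using that by force
    then show ?thesis unfolding N_def using Max_ge[OF fS] by blast
  qed
  have vd: "vdist (Rclass x0) A w z = ereal (real (dd w z))" if "w \<in> Rclass x0" "z \<in> Rclass x0" for w z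
    unfolding dd_def using vdist_fin[OF gen that] .
  define r where "r = real N + 1"
  have "spts (Rclass x0) A \<subseteq> (\<Union>g\<in>schG (Hclass x0). spt_act g ` strongball (Rclass x0) A (Vtx x0) r)"
  proof
    fix q assume q: "q \<in> spts (Rclass x0) A"
    define v where "v = bv q"
    have vR: "v \<in> Rclass x0" unfolding v_def using q bv_spts by blast
    obtain y where yY: "y \<in> Y" and yR: "y \<in> Rclass x0" and Hy: "Hclass y = Hclass v" using repY[OF vR] by blast
    have "y \<in> Hclass y" unfolding Hclass_def Hrel_def Rrel_def Lrel_def by simp
    then have "y \<in> Hclass v" using Hy by simp
    then have "Lrel v y" unfolding inH by simp
    then obtain k k' where k: "y = k'*v" and k': "v = k*y" unfolding Lrel_iff by blast
    have PS: "k \<in> stab (Hclass x0) \<and> k' \<in> stab (Hclass x0) \<and>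
      (\<forall>x\<in>Rclass x0. k'*(k*x) = x \<and> k*(k'*x) = x \<and> k*x \<in> Rclass x0 \<and> k'*x \<in> Rclass x0)"
      by (rule perm_stab[OF yR vR k' k])
    then have kS: "k \<in> stab (Hclass x0)" by blast
    define g where "g = cls (Hclass x0) k"
    have g: "g \<in> schG (Hclass x0)" unfolding g_def schG_cls using kS by blast
    have gy: "gact g y = v" unfolding g_def using gact_cls[OF kS yR] k' by simp
    have d1: "vdist (Rclass x0) A x0 y = ereal (real (dd x0 y))" using vd[OF x0_R yR] .
    have d2: "vdist (Rclass x0) A y x0 = ereal (real (dd y x0))" using vd[OF yR x0_R] .
    have n1: "real (dd x0 y) \<le> real N" using N1[OF yY] by simp
    have n2: "real (dd y x0) \<le> real N" using N2[OF yY] by simp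
    show "q \<in> (\<Union>g\<in>schG (Hclass x0). spt_act g ` strongball (Rclass x0) A (Vtx x0) r)"
    proof (cases q)
      case (Vtx v')
      then have vv: "v' = v" unfolding v_def bv_def by simp
      have pS: "Vtx y \<in> spts (Rclass x0) A" using yR spts_Vtx by blast
      have e1: "sdist (Rclass x0) A (Vtx x0) (Vtx y) = ereal (real (dd x0 y))" unfolding sdist_def using d1 by simp
      have e2: "sdist (Rclass x0) A (Vtx y) (Vtx x0) = ereal (real (dd y x0))" unfolding sdist_def using d2 by simp
      have "ereal (real (dd x0 y)) \<le> ereal r" unfolding ereal_less_eq(3) r_def using n1 by linarith
      then have b1: "sdist (Rclass x0) A (Vtx x0) (Vtx y) \<le> ereal r" unfolding e1 .
      have "ereal (real (dd y x0)) \<le> ereal r" unfolding ereal_less_eq(3) r_def using n2 by linarith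
      then have b2: "sdist (Rclass x0) A (Vtx y) (Vtx x0) \<le> ereal r" unfolding e2 .
      have "Vtx y \<in> strongball (Rclass x0) A (Vtx x0) r"
        unfolding strongball_def outball_def inball_def using pS b1 b2 by blast
      moreover have "spt_act g (Vtx y) = q" unfolding spt_act_def using gy Vtx vv by simp
      ultimately show ?thesis using g by blast
    next
      case (EPt v' a \<mu>)
      then have vv: "v' = v" unfolding v_def bv_def by simp
      have qq: "v \<in> Rclass x0" "a \<in> A" "v*a \<in> Rclass x0" "0 < \<mu>" "\<mu> < 1"
        using q unfolding EPt vv spts_EPt by auto
      have "k'*(v*a) \<in> Rclass x0" using PS qq(3) by blast
      moreover have "k'*(v*a) = y*a" using k by (simp add: mult.assoc)
      ultimately have yaR: "y*a \<in> Rclass x0" by simp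
      have pS: "EPt y a \<mu> \<in> spts (Rclass x0) A" using yR yaR qq spts_EPt by blast
      have d3: "vdist (Rclass x0) A (y*a) x0 = ereal (real (dd (y*a) x0))" using vd[OF yaR x0_R] .
      have n3: "real (dd (y*a) x0) \<le> real N" using N3[OF yY qq(2)] by simp
      have e1: "sdist (Rclass x0) A (Vtx x0) (EPt y a \<mu>) = ereal (real (dd x0 y) + \<mu>)"
        unfolding sdist_def spoint.case d1 plus_ereal.simps(1) by (rule refl)
      have e2: "sdist (Rclass x0) A (EPt y a \<mu>) (Vtx x0) = ereal (1 - \<mu> + real (dd (y*a) x0))"
        unfolding sdist_def spoint.case d3 plus_ereal.simps(1) by (rule refl)
      have "ereal (real (dd x0 y) + \<mu>) \<le> ereal r" unfolding ereal_less_eq(3) r_def using n1 qq by linarith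
      then have b1: "sdist (Rclass x0) A (Vtx x0) (EPt y a \<mu>) \<le> ereal r" unfolding e1 .
      have "ereal (1 - \<mu> + real (dd (y*a) x0)) \<le> ereal r" unfolding ereal_less_eq(3) r_def using n3 qq by linarith
      then have b2: "sdist (Rclass x0) A (EPt y a \<mu>) (Vtx x0) \<le> ereal r" unfolding e2 .
      have "EPt y a \<mu> \<in> strongball (Rclass x0) A (Vtx x0) r"
        unfolding strongball_def outball_def inball_def using pS b1 b2 by blast
      moreover have "spt_act g (EPt y a \<mu>) = q" unfolding spt_act_def using gy EPt vv by simp
      ultimately show ?thesis using g by blast
    qed
  qed
  then show ?thesis using x0_R spts_Vtx by blast
qed


theorem theorem5p1:
  fixes A :: "'a::monoid_mult set" and x0 :: 'a and H R :: "'a set"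
  assumes "finite A" and "generates A"
    and "H = Hclass x0" and "R = Rclass x0"
  shows "(\<forall>g\<in>schG H. bij_betw (spt_act g) (spts R A) (spts R A) \<and>
            (\<forall>p\<in>spts R A. \<forall>q\<in>spts R A. sdist R A (spt_act g p) (spt_act g q) = sdist R A p q))
       \<and> (\<forall>p0\<in>spts R A. \<forall>r::real.
            finite {g \<in> schG H. outball R A p0 r \<inter> spt_act g ` outball R A p0 r \<noteq> {}})
       \<and> ((\<exists>p0\<in>spts R A. \<exists>r::real.
             spts R A \<subseteq> (\<Union>g\<in>schG H. spt_act g ` strongball R A p0 r))
          \<longleftrightarrow> finite {Hclass y | y. y \<in> R})"
  unfolding assms(3,4)
proof (intro conjI)
  show "\<forall>g\<in>schG (Hclass x0). bij_betw (spt_act g) (spts (Rclass x0) A) (spts (Rclass x0) A) \<and>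
            (\<forall>p\<in>spts (Rclass x0) A. \<forall>q\<in>spts (Rclass x0) A.
              sdist (Rclass x0) A (spt_act g p) (spt_act g q) = sdist (Rclass x0) A p q)"
    using part1 by blast
  show "\<forall>p0\<in>spts (Rclass x0) A. \<forall>r::real.
            finite {g \<in> schG (Hclass x0). outball (Rclass x0) A p0 r \<inter> spt_act g ` outball (Rclass x0) A p0 r \<noteq> {}}"
    using part2[OF assms(1)] by blast
  show "(\<exists>p0\<in>spts (Rclass x0) A. \<exists>r::real.
             spts (Rclass x0) A \<subseteq> (\<Union>g\<in>schG (Hclass x0). spt_act g ` strongball (Rclass x0) A p0 r))
          \<longleftrightarrow> finite {Hclass y | y. y \<in> Rclass x0}"
  proof
    assume "\<exists>p0\<in>spts (Rclass x0) A. \<exists>r::real.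
             spts (Rclass x0) A \<subseteq> (\<Union>g\<in>schG (Hclass x0). spt_act g ` strongball (Rclass x0) A p0 r)"
    then obtain p0 r where "p0 \<in> spts (Rclass x0) A"
      "spts (Rclass x0) A \<subseteq> (\<Union>g\<in>schG (Hclass x0). spt_act g ` strongball (Rclass x0) A p0 r)" by blast
    then show "finite {Hclass y | y. y \<in> Rclass x0}" using part3a[OF assms(1)] by blast
  next
    assume "finite {Hclass y | y. y \<in> Rclass x0}"
    then show "\<exists>p0\<in>spts (Rclass x0) A. \<exists>r::real.
             spts (Rclass x0) A \<subseteq> (\<Union>g\<in>schG (Hclass x0). spt_act g ` strongball (Rclass x0) A p0 r)"
      using part3b[OF assms(1,2)] by blast
  qed
qed

end
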